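(* Let $d\ge 2$ and $N\ge 2$ be integers and let $|\psi\rangle\in(\mathbb{C}^d)^{\otimes N}$ be a normalized state. For each $\alpha\in\{1,\dots,N-1\}$ let $\mu^{[\alpha]1}\ge\mu^{[\alpha]2}\ge\cdots$ be the eigenvalues (in nonincreasing order, padded with zeros) of the reduced density operator $\rho_{[1..\alpha]}=\mathrm{Tr}_{\alpha+1,\dots,N}|\psi\rangle\langle\psi|$ of the first $\alpha$ sites, and for a positive integer $D$ set $\epsilon_\alpha(D)=\sum_{i\ge D+1}\mu^{[\alpha]i}$. Then for every positive integer $D$ there exists an open-boundary matrix product state $|\psi_D\rangle$ with bond dimension at most $D$ such that $$\big\||\psi\rangle-|\psi_D\rangle\big\|^2\le 2\sum_{\alpha=1}^{N-1}\epsilon_\alpha(D).$$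
   Context: An open-boundary matrix product state (MPS) with bond dimension at most $D$ on $N$ sites of local dimension $d$ is a vector of the form $\sum_{i_1,\dots,i_N=1}^d A^{[1]i_1}A^{[2]i_2}\cdots A^{[N]i_N}\,|i_1\rangle\otimes\cdots\otimes|i_N\rangle$, where $A^{[k]i}$ is a complex $D_k\times D_{k+1}$ matrix, $D_1=D_{N+1}=1$, and $D_k\le D$ for all $k$ (so the matrix product is a scalar). *)

theory Defs
  imports "Jordan_Normal_Form.Matrix" "Jordan_Normal_Form.Char_Poly"
    "HOL-Computational_Algebra.Polynomial" "HOL-Library.Multiset"
begin

text \<open>Basis index tuples of (C^d)^(tensor N): lists of length N with entries in {0..<d}
  (site k of the paper corresponds to list position k-1).  A vector of (C^d)^(tensor N) is
  a function from such tuples to complex numbers (values elsewhere are irrelevant).\<close>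
definition tuples :: "nat \<Rightarrow> nat \<Rightarrow> nat list set" where
  "tuples N d = {is. length is = N \<and> (\<forall>x\<in>set is. x < d)}"

definition sqnorm_diff :: "nat \<Rightarrow> nat \<Rightarrow> (nat list \<Rightarrow> complex) \<Rightarrow> (nat list \<Rightarrow> complex) \<Rightarrow> real" where
  "sqnorm_diff N d psi phi = (\<Sum>is\<in>tuples N d. (cmod (psi is - phi is))^2)"

definition normalized :: "nat \<Rightarrow> nat \<Rightarrow> (nat list \<Rightarrow> complex) \<Rightarrow> bool" where
  "normalized N d psi \<longleftrightarrow> (\<Sum>is\<in>tuples N d. (cmod (psi is))^2) = 1"

text \<open>Base-d digits (most significant first) of r, of length k: a bijection
  {..<d^k} -> tuples k d, used to index the rows/columns of the reduced density matrix.\<close>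
fun digits :: "nat \<Rightarrow> nat \<Rightarrow> nat \<Rightarrow> nat list" where
  "digits d 0 r = []"
| "digits d (Suc k) r = digits d k (r div d) @ [r mod d]"

definition reduced_density :: "nat \<Rightarrow> nat \<Rightarrow> nat \<Rightarrow> (nat list \<Rightarrow> complex) \<Rightarrow> complex mat" where
  "reduced_density N d a psi = mat (d^a) (d^a) (\<lambda>(r, r').
     \<Sum>c\<in>tuples (N - a) d. psi (digits d a r @ c) * cnj (psi (digits d a r' @ c)))"

text \<open>Eigenvalues (with algebraic multiplicity) of a square complex matrix, as roots of the
  characteristic polynomial; for the Hermitian reduced density matrix they are real, and we
  list their real parts in nonincreasing order.\<close>
definition eigenvalues_desc :: "complex mat \<Rightarrow> real list" where
  "eigenvalues_desc A = rev (sorted_list_of_multiset (image_mset Re (proots (char_poly A))))"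

text \<open>epsilon_a(D): sum of the eigenvalues mu^{[a] i}, i \<ge> D+1 (zero padding contributes 0).\<close>
definition trunc_err :: "nat \<Rightarrow> nat \<Rightarrow> (nat list \<Rightarrow> complex) \<Rightarrow> nat \<Rightarrow> nat \<Rightarrow> real" where
  "trunc_err N d psi a D = sum_list (drop D (eigenvalues_desc (reduced_density N d a psi)))"

text \<open>Coefficient of an open-boundary MPS: A k i is the matrix A^{[k+1] i};
  the product A^{[1] i_1} ... A^{[N] i_N} is a 1x1 matrix.\<close>
definition mps_coeff :: "nat \<Rightarrow> (nat \<Rightarrow> nat \<Rightarrow> complex mat) \<Rightarrow> nat list \<Rightarrow> complex" where
  "mps_coeff N A is = (foldl (\<lambda>M k. M * A k (is ! k)) (1\<^sub>m 1) [0..<N]) $$ (0, 0)"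

definition is_mps :: "nat \<Rightarrow> nat \<Rightarrow> nat \<Rightarrow> (nat list \<Rightarrow> complex) \<Rightarrow> bool" where
  "is_mps N d D phi \<longleftrightarrow> (\<exists>Dims A.
     Dims 0 = 1 \<and> Dims N = 1 \<and> (\<forall>k\<le>N. Dims k \<le> D) \<and>
     (\<forall>k<N. \<forall>i<d. A k i \<in> carrier_mat (Dims k) (Dims (Suc k))) \<and>
     (\<forall>is\<in>tuples N d. phi is = mps_coeff N A is))"

end

theory Submission
  imports Defs "Jordan_Normal_Form.Schur_Decomposition"
begin

definition adj :: "complex mat \<Rightarrow> complex mat" where
  "adj M = mat (dim_col M) (dim_row M) (\<lambda>(i,j). cnj (M $$ (j,i)))"
lemma adj_dim[simp]: "dim_row (adj M) = dim_col M" "dim_col (adj M) = dim_row M"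
  unfolding adj_def by simp_all
lemma adj_index[simp]: "i < dim_col M \<Longrightarrow> j < dim_row M \<Longrightarrow> adj M $$ (i,j) = cnj (M $$ (j,i))"
  unfolding adj_def by simp
lemma adj_carrier[simp]: "M \<in> carrier_mat r c \<Longrightarrow> adj M \<in> carrier_mat c r"
  unfolding carrier_mat_def by simp
lemma adj_adj[simp]: "adj (adj M) = M"
  by (rule eq_matI) simp_all
lemma mult_index_sum: "i < dim_row A \<Longrightarrow> j < dim_col B \<Longrightarrow> dim_col A = dim_row B \<Longrightarrow>
   (A * B) $$ (i,j) = (\<Sum>k<dim_row B. A $$ (i,k) * B $$ (k,j))"
  by (auto simp add: index_mult_mat scalar_prod_def row_def col_def atLeast0LessThan intro!: sum.cong)

lemma adj_mult: assumes "A \<in> carrier_mat n m" "B \<in> carrier_mat m k"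
  shows "adj (A * B) = adj B * adj A"
proof (rule eq_matI)
  fix i j assume i: "i < dim_row (adj B * adj A)" and j: "j < dim_col (adj B * adj A)"
  then have i': "i < k" and j': "j < n" using assms by auto
  have d: "dim_row A = n" "dim_col A = m" "dim_row B = m" "dim_col B = k" using assms by auto
  have "adj (A*B) $$ (i,j) = cnj (\<Sum>l<m. A $$ (j,l) * B $$ (l,i))"
    using d i' j' by (simp add: mult_index_sum del: index_mult_mat(1))
  also have "\<dots> = (\<Sum>l<m. cnj (B $$ (l,i)) * cnj (A $$ (j,l)))"
    by (simp add: mult.commute)
  also have "\<dots> = (adj B * adj A) $$ (i,j)"
    using d i' j' by (simp add: mult_index_sum del: index_mult_mat(1))
  finally show "adj (A * B) $$ (i, j) = (adj B * adj A) $$ (i, j)" .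
qed (use assms in simp_all)

lemma adj_one[simp]: "adj (1\<^sub>m n) = 1\<^sub>m n"
  by (rule eq_matI) simp_all

lemma adj_zero[simp]: "adj (0\<^sub>m n m) = 0\<^sub>m m n"
  by (rule eq_matI) simp_all

lemma adj_four_block: assumes "A \<in> carrier_mat n1 m1" "B \<in> carrier_mat n1 m2"
   "C \<in> carrier_mat n2 m1" "D \<in> carrier_mat n2 m2"
  shows "adj (four_block_mat A B C D) = four_block_mat (adj A) (adj C) (adj B) (adj D)"
  by (rule eq_matI, insert assms, auto simp: four_block_mat_def)

lemma sq_mult_carrier: "A \<in> carrier_mat n n \<Longrightarrow> B \<in> carrier_mat n n \<Longrightarrow> A * B \<in> carrier_mat n n"
  by simp

lemma cscalar_sum: "v \<in> carrier_vec n \<Longrightarrow> w \<in> carrier_vec n \<Longrightarrow>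
   v \<bullet>c w = (\<Sum>k<n. v$k * cnj (w$k))"
  by (auto simp add: scalar_prod_def atLeast0LessThan intro!: sum.cong)

lemma self_cscalar: "v \<in> carrier_vec n \<Longrightarrow> v \<bullet>c v = of_real (\<Sum>k<n. (cmod (v$k))^2)"
proof -
  have "\<And>z::complex. z * cnj z = (of_real (cmod z))^2" by (metis complex_norm_square of_real_power)
  then show "v \<in> carrier_vec n \<Longrightarrow> ?thesis" by (simp add: cscalar_sum)
qed

lemma diag_herm:
  fixes A :: "complex mat"
  assumes "A \<in> carrier_mat n n" "adj A = A" "char_poly A = (\<Prod>e\<leftarrow>es. [:-e,1:])"
  shows "\<exists>U. U \<in> carrier_mat n n \<and> adj U * U = 1\<^sub>m n \<and> U * adj U = 1\<^sub>m n \<and>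
     adj U * A * U = mat n n (\<lambda>(i,j). if i = j then es!i else 0)"
  using assms
proof (induction es arbitrary: n A)
  case Nil
  then have "n = 0" using degree_monic_char_poly[OF Nil(1)] by simp
  then show ?case using Nil by (intro exI[of _ "1\<^sub>m 0"]) (auto intro!: eq_matI)
next
  case (Cons e es n A)
  note A = Cons(2) and herm = Cons(3) and cp = Cons(4)
  have dA: "dim_row A = n" "dim_col A = n" using A by auto
  have "degree (char_poly A) = n" using degree_monic_char_poly[OF A] by simp
  then have n_eq: "n = Suc (length es)"
    using degree_linear_factors[of uminus "e#es"] cp by simp
  then have n0: "n \<noteq> 0" by simp
  have ev: "eigenvalue A e" unfolding eigenvalue_root_char_poly[OF A] cp by simp
  define v where "v = find_eigenvector A e"
  from find_eigenvector[OF A ev, folded v_def]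
  have v: "v \<in> carrier_vec n" and v0: "v \<noteq> 0\<^sub>v n" and Av: "A *\<^sub>v v = e \<cdot>\<^sub>v v"
    unfolding eigenvector_def using dA by auto
  interpret cof_vec_space n "TYPE(complex)" .
  define b where "b = basis_completion v"
  define ws where "ws = gram_schmidt n b"
  from basis_completion[OF v v0, folded b_def]
  have dist_b: "distinct b" and indep: "\<not> lin_dep (set b)" and bc: "set b \<subseteq> carrier_vec n"
    and hdb: "hd b = v" and len_b: "length b = n" by auto
  from hdb len_b n0 obtain vs where bv: "b = v # vs" by (cases b, auto)
  from gram_schmidt_result[OF bc dist_b indep refl, folded ws_def]
  have wsc: "set ws \<subseteq> carrier_vec n" and orth: "corthogonal ws" and lws: "length ws = n"
    by (auto simp: len_b)
  have hdws: "hd ws = v" unfolding ws_def bv using gram_schmidt_hd[OF v] .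
  have ws0: "ws ! 0 = v" using hdws lws n0 by (cases ws) auto
  have wsi: "ws ! i \<in> carrier_vec n" if "i < n" for i using wsc lws that by auto
  define r where "r j = sqrt (\<Sum>k<n. (cmod (ws!j$k))^2)" for j
  have wsnorm: "ws!j \<bullet>c ws!j = of_real ((r j)^2)" if "j < n" for j
    using self_cscalar[OF wsi[OF that]] unfolding r_def by (simp add: sum_nonneg)
  have rpos: "r j > 0" if "j < n" for j
  proof -
    have "ws!j \<bullet>c ws!j \<noteq> 0" using corthogonalD[OF orth, of j j] that lws by auto
    then have "r j \<noteq> 0" using wsnorm[OF that] by auto
    moreover have "r j \<ge> 0" unfolding r_def by (simp add: sum_nonneg)
    ultimately show ?thesis by simp
  qed
  define W where "W = mat n n (\<lambda>(i,j). ws!j $ i / of_real (r j))"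
  have W: "W \<in> carrier_mat n n" unfolding W_def by simp
  have WW: "adj W * W = 1\<^sub>m n"
  proof (rule eq_matI)
    fix i j assume i: "i < dim_row (1\<^sub>m n)" and j: "j < dim_col (1\<^sub>m n)"
    then have i: "i < n" and j: "j < n" by auto
    have "(adj W * W) $$ (i,j) = (\<Sum>k<n. cnj (ws!i$k / of_real (r i)) * (ws!j$k / of_real (r j)))"
      using i j W by (simp add: mult_index_sum del: index_mult_mat(1)) (simp add: W_def)
    also have "\<dots> = (\<Sum>k<n. ws!j$k * cnj (ws!i$k)) / (of_real (r i) * of_real (r j))"
      by (simp add: sum_divide_distrib mult.commute)
    also have "\<dots> = (ws!j \<bullet>c ws!i) / (of_real (r i) * of_real (r j))"
      using cscalar_sum[OF wsi[OF j] wsi[OF i]] by simp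
    also have "\<dots> = 1\<^sub>m n $$ (i,j)"
    proof (cases "i = j")
      case True
      then show ?thesis using wsnorm[OF i] rpos[OF i] i by (simp add: power2_eq_square)
    next
      case False
      then have "ws!j \<bullet>c ws!i = 0" using corthogonalD[OF orth, of j i] i j lws by auto
      then show ?thesis using False i j by simp
    qed
    finally show "(adj W * W) $$ (i,j) = 1\<^sub>m n $$ (i,j)" .
  qed (use W in auto)
  have WW': "W * adj W = 1\<^sub>m n"
    using mat_mult_left_right_inverse[OF adj_carrier[OF W] W WW] .
  have AW0: "(A * W) $$ (k,0) = e * W $$ (k,0)" if k: "k < n" for k
  proof -
    have "(A * W) $$ (k,0) = (\<Sum>l<n. A $$ (k,l) * v $ l) / of_real (r 0)"
      using k n0 W dA ws0 by (simp add: mult_index_sum sum_divide_distrib del: index_mult_mat(1)) (simp add: W_def)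
    also have "(\<Sum>l<n. A $$ (k,l) * v $ l) = (A *\<^sub>v v) $ k"
      using k dA v by (auto simp: scalar_prod_def row_def atLeast0LessThan intro!: sum.cong)
    also have "\<dots> = e * v $ k" using Av k v by simp
    finally show ?thesis using k n0 ws0 by (simp add: W_def)
  qed
  define A' where "A' = adj W * A * W"
  have A': "A' \<in> carrier_mat n n" unfolding A'_def using W A by auto
  have A'0: "A' $$ (i,0) = (if i = 0 then e else 0)" if i: "i < n" for i
  proof -
    have "A' = adj W * (A * W)" unfolding A'_def using W A by (simp add: assoc_mult_mat[of _ n n _ n _ n])
    then have "A' $$ (i,0) = (\<Sum>k<n. adj W $$ (i,k) * (A * W) $$ (k,0))"
      using i n0 W A by (simp add: mult_index_sum del: index_mult_mat(1))
    also have "\<dots> = e * (\<Sum>k<n. adj W $$ (i,k) * W $$ (k,0))"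
      by (simp add: AW0 sum_distrib_left mult.left_commute)
    also have "(\<Sum>k<n. adj W $$ (i,k) * W $$ (k,0)) = (adj W * W) $$ (i,0)"
      using i n0 W by (simp add: mult_index_sum del: index_mult_mat(1))
    also have "\<dots> = (if i = 0 then 1 else 0)" using WW i n0 by simp
    finally show ?thesis by simp
  qed
  have hermA': "adj A' = A'"
    unfolding A'_def using W A herm
    by (simp add: adj_mult[of _ n n _ n] assoc_mult_mat[of _ n n _ n _ n])
  have ereal: "cnj e = e"
    using arg_cong[OF hermA', of "\<lambda>M. M $$ (0,0)"] A'0[of 0] n0 A' by simp
  have A'0r: "A' $$ (0,j) = (if j = 0 then e else 0)" if j: "j < n" for j
    using arg_cong[OF hermA', of "\<lambda>M. M $$ (0,j)"] A'0[OF j] n0 A' j ereal by auto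
  define A3 where "A3 = mat (n-1) (n-1) (\<lambda>(i,j). A' $$ (Suc i, Suc j))"
  define E1 where "E1 = (mat 1 1 (\<lambda>_. e) :: complex mat)"
  have A3: "A3 \<in> carrier_mat (n-1) (n-1)" unfolding A3_def by simp
  have E1: "E1 \<in> carrier_mat 1 1" unfolding E1_def by simp
  have A'blk: "A' = four_block_mat E1 (0\<^sub>m 1 (n-1)) (0\<^sub>m (n-1) 1) A3"
  proof (rule eq_matI)
    fix i j assume "i < dim_row (four_block_mat E1 (0\<^sub>m 1 (n-1)) (0\<^sub>m (n-1) 1) A3)"
      "j < dim_col (four_block_mat E1 (0\<^sub>m 1 (n-1)) (0\<^sub>m (n-1) 1) A3)"
    then have i: "i < n" and j: "j < n" using A3 E1 n0 by auto
    show "A' $$ (i,j) = four_block_mat E1 (0\<^sub>m 1 (n-1)) (0\<^sub>m (n-1) 1) A3 $$ (i,j)"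
      using i j A3 E1 n0 A'0[OF i] A'0r[OF j]
      by (cases "i = 0"; cases "j = 0") (simp_all add: A3_def E1_def)
  qed (use A' A3 E1 n0 in auto)
  have "similar_mat_wit A' A (adj W) W"
    unfolding similar_mat_wit_def Let_def using A' A W WW WW' by (auto simp: A'_def)
  then have cA': "char_poly A' = char_poly A"
    by (intro char_poly_similar) (auto simp: similar_mat_def)
  have c4: "char_poly A' = char_poly E1 * char_poly A3"
    unfolding A'blk by (rule char_poly_four_block_zeros_col[OF E1 _ A3]) simp
  have cE: "char_poly E1 = [:-e, 1:]"
    by (simp add: E1_def char_poly_defs det_def sign_def)
  have "[:-e, 1:] * char_poly A3 = [:-e, 1:] * (\<Prod>e\<leftarrow>es. [:-e,1:])"
    using cA' c4 cE cp by simp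
  then have cp3: "char_poly A3 = (\<Prod>e\<leftarrow>es. [:-e,1:])"
    by (subst (asm) mult_cancel_left) simp
  have herm3: "adj A3 = A3"
  proof (rule eq_matI)
    fix i j assume "i < dim_row A3" "j < dim_col A3"
    then have i: "i < n-1" and j: "j < n-1" using A3 by auto
    show "adj A3 $$ (i,j) = A3 $$ (i,j)"
      using arg_cong[OF hermA', of "\<lambda>M. M $$ (Suc i, Suc j)"] i j A3 A'
      by (simp add: A3_def)
  qed (use A3 in auto)
  from Cons.IH[OF A3 herm3 cp3] obtain U3 where U3: "U3 \<in> carrier_mat (n-1) (n-1)"
    and U3U: "adj U3 * U3 = 1\<^sub>m (n-1)" and U3U': "U3 * adj U3 = 1\<^sub>m (n-1)"
    and U3D: "adj U3 * A3 * U3 = mat (n-1) (n-1) (\<lambda>(i,j). if i = j then es!i else 0)" by blast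
  define B where "B = four_block_mat (1\<^sub>m 1) (0\<^sub>m 1 (n-1)) (0\<^sub>m (n-1) 1) U3"
  have nn: "1 + (n-1) = n" using n0 by simp
  have B: "B \<in> carrier_mat n n" unfolding B_def using U3 nn by (metis four_block_carrier_mat one_carrier_mat)
  have adjB: "adj B = four_block_mat (1\<^sub>m 1) (0\<^sub>m 1 (n-1)) (0\<^sub>m (n-1) 1) (adj U3)"
    unfolding B_def using U3 by (simp add: adj_four_block[of _ 1 1 _ "n-1" _ "n-1"])
  have BB: "adj B * B = 1\<^sub>m n"
    unfolding adjB unfolding B_def using U3 U3U n0
    by (simp add: mult_four_block_mat[of _ 1 1 _ "n-1" _ "n-1" _ _ 1 _ "n-1"] nn)
  have BB': "B * adj B = 1\<^sub>m n"
    using mat_mult_left_right_inverse[OF adj_carrier[OF B] B BB] .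
  have blk: "adj B * A' * B = four_block_mat E1 (0\<^sub>m 1 (n-1)) (0\<^sub>m (n-1) 1) (adj U3 * A3 * U3)"
    unfolding adjB unfolding B_def A'blk using U3 A3 E1 adj_carrier[OF U3] sq_mult_carrier[OF adj_carrier[OF U3] A3]
    by (simp add: mult_four_block_mat[of _ 1 1 _ "n-1" _ "n-1" _ _ 1 _ "n-1"])
  define U where "U = W * B"
  have U: "U \<in> carrier_mat n n" unfolding U_def using W B by simp
  have adjU: "adj U = adj B * adj W" unfolding U_def using W B by (simp add: adj_mult)
  have aB: "adj B \<in> carrier_mat n n" and aW: "adj W \<in> carrier_mat n n" using B W by auto
  have WB: "W * B \<in> carrier_mat n n" using W B by simp
  have e1: "adj W * (W * B) = B" using assoc_mult_mat[OF aW W B, symmetric] WW B by simp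
  have "adj U * U = adj B * (adj W * (W * B))"
    unfolding adjU unfolding U_def using assoc_mult_mat[OF aB aW WB] .
  then have UU: "adj U * U = 1\<^sub>m n" using e1 BB by simp
  have e2: "B * (adj B * adj W) = adj W" using assoc_mult_mat[OF B aB aW, symmetric] BB' left_mult_one_mat[OF aW] by simp
  have "U * adj U = W * (B * (adj B * adj W))"
    unfolding adjU unfolding U_def using assoc_mult_mat[OF W B, of "adj B * adj W" n] aB aW by simp
  then have UU': "U * adj U = 1\<^sub>m n" using e2 WW' by simp
  have "adj U * A * U = adj B * (adj W * A * W) * B"
    unfolding adjU unfolding U_def using W B A aB aW
    by (simp add: assoc_mult_mat[of _ n n _ n _ n] sq_mult_carrier)
  then have "adj U * A * U = adj B * A' * B" unfolding A'_def .
  also have "\<dots> = mat n n (\<lambda>(i,j). if i = j then (e#es)!i else 0)"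
    unfolding blk
  proof (rule eq_matI)
    fix i j assume "i < dim_row (mat n n (\<lambda>(i,j). if i = j then (e#es)!i else 0))"
      "j < dim_col (mat n n (\<lambda>(i,j). if i = j then (e#es)!i else 0))"
    then have i: "i < n" and j: "j < n" by auto
    show "four_block_mat E1 (0\<^sub>m 1 (n-1)) (0\<^sub>m (n-1) 1) (adj U3 * A3 * U3) $$ (i,j) =
       mat n n (\<lambda>(i,j). if i = j then (e#es)!i else 0) $$ (i,j)"
      using i j U3 A3 E1 n0 U3D
      by (cases "i = 0"; cases "j = 0") (auto simp: E1_def U3D nth_Cons')
  qed (use U3 A3 E1 nn in auto)
  finally show ?case using U UU UU' by blast
qed



definition ip :: "'x set \<Rightarrow> ('x \<Rightarrow> complex) \<Rightarrow> ('x \<Rightarrow> complex) \<Rightarrow> complex" where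
  "ip X f g = (\<Sum>x\<in>X. cnj (f x) * g x)"

definition nsq :: "'x set \<Rightarrow> ('x \<Rightarrow> complex) \<Rightarrow> real" where
  "nsq X f = (\<Sum>x\<in>X. (cmod (f x))^2)"

definition pr :: "'x set \<Rightarrow> (nat \<Rightarrow> 'x \<Rightarrow> complex) \<Rightarrow> nat \<Rightarrow> ('x \<Rightarrow> complex) \<Rightarrow> 'x \<Rightarrow> complex" where
  "pr X u k f x = (\<Sum>s<k. u s x * ip X (u s) f)"

definition orthon :: "'x set \<Rightarrow> (nat \<Rightarrow> 'x \<Rightarrow> complex) \<Rightarrow> nat \<Rightarrow> bool" where
  "orthon X u k \<longleftrightarrow> (\<forall>s<k. \<forall>t<k. ip X (u s) (u t) = (if s = t then 1 else 0))"

lemma cmod_sq_cnj: "(cmod z)^2 = Re (cnj z * z)"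
  by (simp only: cmod_power2) (simp add: power2_eq_square)

lemma nsq_ip: "nsq X f = Re (ip X f f)"
  unfolding nsq_def ip_def by (simp add: cmod_sq_cnj)

lemma ip_cnj: "cnj (ip X f g) = ip X g f"
  unfolding ip_def by (simp add: mult.commute)

lemma ip_add2: "ip X f (\<lambda>x. g x + h x) = ip X f g + ip X f h"
  unfolding ip_def by (simp add: distrib_left sum.distrib)

lemma ip_diff2: "ip X f (\<lambda>x. g x - h x) = ip X f g - ip X f h"
  unfolding ip_def by (simp add: right_diff_distrib sum_subtractf)

lemma ip_sum2: "ip X f (\<lambda>x. \<Sum>s\<in>S. G s x) = (\<Sum>s\<in>S. ip X f (G s))"
  unfolding ip_def by (simp add: sum_distrib_left sum.swap[of _ S])

lemma ip_sum1: "ip X (\<lambda>x. \<Sum>s\<in>S. G s x) h = (\<Sum>s\<in>S. ip X (G s) h)"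
  unfolding ip_def by (simp add: sum_distrib_right sum.swap[of _ S])

lemma ip_smult2: "ip X f (\<lambda>x. c * g x) = c * ip X f g"
  unfolding ip_def by (simp add: sum_distrib_left mult.left_commute)

lemma ip_smult1: "ip X (\<lambda>x. c * g x) h = cnj c * ip X g h"
  unfolding ip_def by (simp add: sum_distrib_left mult.assoc)

lemma ip_pr_u: assumes "orthon X u k" "s < k"
  shows "ip X (u s) (pr X u k f) = ip X (u s) f"
proof -
  have "ip X (u s) (pr X u k f) = (\<Sum>t<k. ip X (u s) (u t) * ip X (u t) f)"
    unfolding pr_def[abs_def] by (simp add: ip_sum2 ip_smult2[symmetric] mult.commute)
  also have "\<dots> = (\<Sum>t<k. (if s = t then ip X (u t) f else 0))"
    using assms unfolding orthon_def by (intro sum.cong) auto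
  also have "\<dots> = ip X (u s) f" using assms(2) by simp
  finally show ?thesis .
qed

lemma ip_u_res: assumes "orthon X u k" "s < k"
  shows "ip X (u s) (\<lambda>x. f x - pr X u k f x) = 0"
  using ip_pr_u[OF assms] by (simp add: ip_diff2)

lemma ip_pr_res: assumes "orthon X u k"
  shows "ip X (pr X u k g) (\<lambda>x. f x - pr X u k f x) = 0"
proof -
  have "ip X (pr X u k g) (\<lambda>x. f x - pr X u k f x) =
     (\<Sum>s<k. cnj (ip X (u s) g) * ip X (u s) (\<lambda>x. f x - pr X u k f x))"
    unfolding pr_def[abs_def] by (simp add: ip_sum1 ip_smult1[symmetric] mult.commute)
  also have "\<dots> = 0" using ip_u_res[OF assms] by simp
  finally show ?thesis .
qed

lemma nsq_add: "nsq X (\<lambda>x. a x + b x) = nsq X a + nsq X b + 2 * Re (ip X a b)"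
proof -
  have "\<And>x. (cmod (a x + b x))^2 = (cmod (a x))^2 + (cmod (b x))^2 + 2 * Re (cnj (a x) * b x)"
    by (simp only: cmod_power2) (simp add: power2_eq_square algebra_simps)
  then show ?thesis unfolding nsq_def ip_def by (simp add: sum.distrib sum_distrib_left Re_sum)
qed

lemma pr_diff: "pr X u k (\<lambda>x. f x - g x) x = pr X u k f x - pr X u k g x"
  unfolding pr_def by (simp add: ip_diff2 right_diff_distrib sum_subtractf)

lemma pr_zero: "pr X u k (\<lambda>x. 0) x = 0"
  unfolding pr_def ip_def by simp

lemma pyth: assumes "orthon X u k"
  shows "nsq X (\<lambda>x. g x - pr X u k f x) =
         nsq X (\<lambda>x. g x - pr X u k g x) + nsq X (pr X u k (\<lambda>x. g x - f x))"
proof -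
  have eq: "(\<lambda>x. g x - pr X u k f x) = (\<lambda>x. (g x - pr X u k g x) + pr X u k (\<lambda>x. g x - f x) x)"
    by (simp add: pr_diff)
  have "ip X (\<lambda>x. g x - pr X u k g x) (pr X u k (\<lambda>x. g x - f x)) = 0"
    using ip_pr_res[OF assms, of "\<lambda>x. g x - f x" g] by (metis ip_cnj complex_cnj_zero)
  then show ?thesis unfolding eq nsq_add by simp
qed

lemma nsq_nonneg: "nsq X f \<ge> 0"
  unfolding nsq_def by (simp add: sum_nonneg)

lemma pr_contract: assumes "orthon X u k"
  shows "nsq X (pr X u k h) \<le> nsq X h"
proof -
  have "nsq X (\<lambda>x. h x - pr X u k (\<lambda>x. 0) x) = nsq X (\<lambda>x. h x - pr X u k h x) + nsq X (pr X u k (\<lambda>x. h x - 0))"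
    using pyth[OF assms] .
  then have "nsq X h = nsq X (\<lambda>x. h x - pr X u k h x) + nsq X (pr X u k h)"
    by (simp add: pr_zero)
  then show ?thesis using nsq_nonneg[of X "\<lambda>x. h x - pr X u k h x"] by simp
qed

lemma nsq_pr: assumes "orthon X u k"
  shows "nsq X (pr X u k f) = (\<Sum>s<k. (cmod (ip X (u s) f))^2)"
proof -
  have e: "pr X u k f = (\<lambda>x. \<Sum>s<k. ip X (u s) f * u s x)" by (rule ext) (simp add: pr_def mult.commute)
  have "ip X (\<lambda>x. \<Sum>s<k. ip X (u s) f * u s x) (pr X u k f) = (\<Sum>s<k. cnj (ip X (u s) f) * ip X (u s) (pr X u k f))"
    by (simp add: ip_sum1 ip_smult1)
  then have "ip X (pr X u k f) (pr X u k f) = (\<Sum>s<k. cnj (ip X (u s) f) * ip X (u s) (pr X u k f))"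
    by (simp add: e[symmetric])
  also have "\<dots> = (\<Sum>s<k. cnj (ip X (u s) f) * ip X (u s) f)"
    using ip_pr_u[OF assms] by simp
  finally show ?thesis unfolding nsq_ip by (simp add: cmod_sq_cnj)
qed

lemma nsq_res: assumes "orthon X u k"
  shows "nsq X (\<lambda>x. f x - pr X u k f x) = nsq X f - (\<Sum>s<k. (cmod (ip X (u s) f))^2)"
proof -
  have "nsq X (\<lambda>x. f x - pr X u k (\<lambda>x. 0) x) = nsq X (\<lambda>x. f x - pr X u k f x) + nsq X (pr X u k (\<lambda>x. f x - 0))"
    using pyth[OF assms] .
  then show ?thesis using nsq_pr[OF assms, of f] by (simp add: pr_zero)
qed



lemma finite_tuples: "finite (tuples n d)"
proof -
  have "tuples n d \<subseteq> {xs. set xs \<subseteq> {..<d} \<and> length xs = n}"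
    unfolding tuples_def by auto
  moreover have "finite {xs. set xs \<subseteq> {..<d} \<and> length xs = n}"
    by (rule finite_lists_length_eq) simp
  ultimately show ?thesis by (rule finite_subset)
qed

lemma tuples_append: "x \<in> tuples a d \<Longrightarrow> z \<in> tuples m d \<Longrightarrow> x @ z \<in> tuples (a + m) d"
  unfolding tuples_def by auto

lemma tuples_take: "v \<in> tuples N d \<Longrightarrow> a \<le> N \<Longrightarrow> take a v \<in> tuples a d"
  unfolding tuples_def by (auto dest: in_set_takeD)

lemma tuples_drop: "v \<in> tuples N d \<Longrightarrow> drop a v \<in> tuples (N - a) d"
  unfolding tuples_def by (auto dest: in_set_dropD)

lemma split_sum: assumes "a \<le> N"
  shows "(\<Sum>v\<in>tuples N d. F v) = (\<Sum>z\<in>tuples (N-a) d. \<Sum>x\<in>tuples a d. F (x @ z))"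
proof -
  have bij: "bij_betw (\<lambda>(x,z). x @ z) (tuples a d \<times> tuples (N-a) d) (tuples N d)"
  proof (rule bij_betw_byWitness[where f' = "\<lambda>v. (take a v, drop a v)"])
    show "\<forall>p\<in>tuples a d \<times> tuples (N - a) d. (\<lambda>v. (take a v, drop a v)) ((\<lambda>(x, z). x @ z) p) = p"
      unfolding tuples_def by auto
    show "\<forall>v\<in>tuples N d. (\<lambda>(x, z). x @ z) (take a v, drop a v) = v" by simp
    show "(\<lambda>(x, z). x @ z) ` (tuples a d \<times> tuples (N - a) d) \<subseteq> tuples N d"
      using assms unfolding tuples_def by auto
    show "(\<lambda>v. (take a v, drop a v)) ` tuples N d \<subseteq> tuples a d \<times> tuples (N - a) d"
      using assms tuples_take tuples_drop by blast
  qed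
  have "(\<Sum>v\<in>tuples N d. F v) = (\<Sum>p\<in>tuples a d \<times> tuples (N-a) d. F ((\<lambda>(x,z). x @ z) p))"
    using sum.reindex_bij_betw[OF bij, of F] by simp
  also have "\<dots> = (\<Sum>x\<in>tuples a d. \<Sum>z\<in>tuples (N-a) d. F (x @ z))"
    by (simp add: sum.cartesian_product split_beta)
  also have "\<dots> = (\<Sum>z\<in>tuples (N-a) d. \<Sum>x\<in>tuples a d. F (x @ z))"
    by (rule sum.swap)
  finally show ?thesis .
qed

definition Pop :: "nat \<Rightarrow> nat \<Rightarrow> (nat \<Rightarrow> nat list \<Rightarrow> complex) \<Rightarrow> nat \<Rightarrow> (nat list \<Rightarrow> complex) \<Rightarrow> nat list \<Rightarrow> complex" where
  "Pop d a u k f v = pr (tuples a d) u k (\<lambda>x. f (x @ drop a v)) (take a v)"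

lemma Pop_app: "x \<in> tuples a d \<Longrightarrow> Pop d a u k f (x @ z) = pr (tuples a d) u k (\<lambda>x'. f (x' @ z)) x"
  unfolding Pop_def tuples_def by simp

lemma nsq_split: assumes "a \<le> N"
  shows "nsq (tuples N d) F = (\<Sum>z\<in>tuples (N-a) d. nsq (tuples a d) (\<lambda>x. F (x @ z)))"
  unfolding nsq_def using split_sum[OF assms] .

lemma pythN: assumes "orthon (tuples a d) u k" "a \<le> N"
  shows "nsq (tuples N d) (\<lambda>v. g v - Pop d a u k f v) =
    nsq (tuples N d) (\<lambda>v. g v - Pop d a u k g v) + nsq (tuples N d) (Pop d a u k (\<lambda>v. g v - f v))"
proof -
  have "nsq (tuples N d) (\<lambda>v. g v - Pop d a u k f v) =
     (\<Sum>z\<in>tuples (N-a) d. nsq (tuples a d) (\<lambda>x. g (x @ z) - pr (tuples a d) u k (\<lambda>x'. f (x' @ z)) x))"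
    unfolding nsq_split[OF assms(2)] by (intro sum.cong refl) (simp add: nsq_def Pop_app)
  also have "\<dots> = (\<Sum>z\<in>tuples (N-a) d. nsq (tuples a d) (\<lambda>x. g (x @ z) - pr (tuples a d) u k (\<lambda>x'. g (x' @ z)) x)
       + nsq (tuples a d) (pr (tuples a d) u k (\<lambda>x. g (x @ z) - f (x @ z))))"
    by (intro sum.cong refl) (rule pyth[OF assms(1)])
  also have "\<dots> = nsq (tuples N d) (\<lambda>v. g v - Pop d a u k g v) + nsq (tuples N d) (Pop d a u k (\<lambda>v. g v - f v))"
    unfolding nsq_split[OF assms(2)] sum.distrib
    by (intro arg_cong2[where f="(+)"] sum.cong refl) (simp_all add: nsq_def Pop_app)
  finally show ?thesis .
qed

lemma contractN: assumes "orthon (tuples a d) u k" "a \<le> N"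
  shows "nsq (tuples N d) (Pop d a u k h) \<le> nsq (tuples N d) h"
proof -
  have "nsq (tuples N d) (Pop d a u k h) = (\<Sum>z\<in>tuples (N-a) d. nsq (tuples a d) (pr (tuples a d) u k (\<lambda>x. h (x @ z))))"
    unfolding nsq_split[OF assms(2)] by (intro sum.cong refl) (simp add: nsq_def Pop_app)
  also have "\<dots> \<le> (\<Sum>z\<in>tuples (N-a) d. nsq (tuples a d) (\<lambda>x. h (x @ z)))"
    by (intro sum_mono pr_contract[OF assms(1)])
  also have "\<dots> = nsq (tuples N d) h" unfolding nsq_split[OF assms(2)] ..
  finally show ?thesis .
qed

lemma chain:
  assumes "\<forall>j\<in>set js. orthon (tuples j d) (u j) (k j) \<and> j \<le> N"
  shows "nsq (tuples N d) (\<lambda>v. psi v - foldr (\<lambda>j. Pop d j (u j) (k j)) js psi v)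
     \<le> (\<Sum>j\<leftarrow>js. nsq (tuples N d) (\<lambda>v. psi v - Pop d j (u j) (k j) psi v))"
  using assms
proof (induction js)
  case Nil
  then show ?case by (simp add: nsq_def)
next
  case (Cons j js)
  let ?phi = "foldr (\<lambda>j. Pop d j (u j) (k j)) js psi"
  have o: "orthon (tuples j d) (u j) (k j)" and jN: "j \<le> N" using Cons.prems by auto
  have "nsq (tuples N d) (\<lambda>v. psi v - Pop d j (u j) (k j) ?phi v) =
     nsq (tuples N d) (\<lambda>v. psi v - Pop d j (u j) (k j) psi v) + nsq (tuples N d) (Pop d j (u j) (k j) (\<lambda>v. psi v - ?phi v))"
    by (rule pythN[OF o jN])
  also have "nsq (tuples N d) (Pop d j (u j) (k j) (\<lambda>v. psi v - ?phi v)) \<le> nsq (tuples N d) (\<lambda>v. psi v - ?phi v)"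
    by (rule contractN[OF o jN])
  finally show ?case using Cons by simp
qed



fun wv :: "nat \<Rightarrow> (nat \<Rightarrow> nat \<Rightarrow> nat list \<Rightarrow> complex) \<Rightarrow> (nat \<Rightarrow> nat) \<Rightarrow> nat \<Rightarrow> nat \<Rightarrow> nat list \<Rightarrow> complex" where
  "wv d u k 0 t y = 1"
| "wv d u k (Suc m) t y = (\<Sum>s<k m. wv d u k m s (butlast y) * ip (tuples m d) (u m s) (\<lambda>x. u (Suc m) t (x @ [last y])))"

definition Tmap :: "nat \<Rightarrow> (nat \<Rightarrow> nat \<Rightarrow> nat list \<Rightarrow> complex) \<Rightarrow> (nat \<Rightarrow> nat) \<Rightarrow> nat \<Rightarrow> (nat list \<Rightarrow> complex) \<Rightarrow> nat list \<Rightarrow> complex" where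
  "Tmap d u k m f v = (\<Sum>t<k m. wv d u k m t (take m v) * ip (tuples m d) (u m t) (\<lambda>x. f (x @ drop m v)))"

lemma tuples_0: "tuples 0 d = {[]}"
  unfolding tuples_def by auto

lemma Tmap_0: assumes "k 0 = 1" "u 0 0 [] = 1"
  shows "Tmap d u k 0 f v = f v"
  unfolding Tmap_def using assms by (simp add: tuples_0 ip_def)

lemma Tmap_Suc: assumes v: "v \<in> tuples N d" and m: "Suc m \<le> N"
  shows "Tmap d u k (Suc m) f v = Tmap d u k m (Pop d (Suc m) (u (Suc m)) (k (Suc m)) f) v"
proof -
  have lv: "length v = N" using v unfolding tuples_def by simp
  let ?i = "v ! m"
  define c where "c t = ip (tuples (Suc m) d) (u (Suc m) t) (\<lambda>x. f (x @ drop (Suc m) v))" for t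
  have P: "Pop d (Suc m) (u (Suc m)) (k (Suc m)) f (x @ drop m v) = (\<Sum>t<k (Suc m). u (Suc m) t (x @ [?i]) * c t)"
    if x: "x \<in> tuples m d" for x
  proof -
    have lx: "length x = m" using x unfolding tuples_def by simp
    have dm: "drop m v = ?i # drop (Suc m) v" using lv m by (simp add: Cons_nth_drop_Suc)
    have "take (Suc m) (x @ drop m v) = x @ [?i]" using lx dm by simp
    moreover have "drop (Suc m) (x @ drop m v) = drop (Suc m) v" using lx dm by simp
    ultimately show ?thesis unfolding Pop_def pr_def c_def by simp
  qed
  have "Tmap d u k m (Pop d (Suc m) (u (Suc m)) (k (Suc m)) f) v =
     (\<Sum>s<k m. wv d u k m s (take m v) * ip (tuples m d) (u m s) (\<lambda>x. \<Sum>t<k (Suc m). u (Suc m) t (x @ [?i]) * c t))"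
    unfolding Tmap_def by (intro sum.cong refl arg_cong2[where f="(*)"]) (simp add: ip_def P)
  also have "\<dots> = (\<Sum>s<k m. \<Sum>t<k (Suc m). wv d u k m s (take m v) * (ip (tuples m d) (u m s) (\<lambda>x. u (Suc m) t (x @ [?i])) * c t))"
    by (simp add: ip_sum2 sum_distrib_left mult.commute ip_smult2[symmetric])
  also have "\<dots> = (\<Sum>t<k (Suc m). (\<Sum>s<k m. wv d u k m s (take m v) * ip (tuples m d) (u m s) (\<lambda>x. u (Suc m) t (x @ [?i]))) * c t)"
    by (simp add: sum.swap[of _ "{..<k m}"] sum_distrib_right mult.assoc)
  also have "\<dots> = Tmap d u k (Suc m) f v"
  proof -
    have "butlast (take (Suc m) v) = take m v" using lv m by (simp add: butlast_take)
    moreover have "last (take (Suc m) v) = ?i" using lv m by (simp add: take_Suc_conv_app_nth)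
    ultimately show ?thesis unfolding Tmap_def c_def by simp
  qed
  finally show ?thesis by simp
qed

lemma Tmap_foldr: assumes "k 0 = 1" "u 0 0 [] = 1" "v \<in> tuples N d" "m \<le> N"
  shows "Tmap d u k m f v = foldr (\<lambda>j. Pop d j (u j) (k j)) [1..<Suc m] f v"
  using assms(4)
proof (induction m arbitrary: f)
  case 0
  then show ?case using Tmap_0[where k=k and u=u, OF assms(1,2)] by simp
next
  case (Suc m)
  have "Tmap d u k (Suc m) f v = Tmap d u k m (Pop d (Suc m) (u (Suc m)) (k (Suc m)) f) v"
    using Tmap_Suc[OF assms(3) Suc.prems] .
  also have "\<dots> = foldr (\<lambda>j. Pop d j (u j) (k j)) [1..<Suc m] (Pop d (Suc m) (u (Suc m)) (k (Suc m)) f) v"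
    using Suc by simp
  also have "\<dots> = foldr (\<lambda>j. Pop d j (u j) (k j)) [1..<Suc (Suc m)] f v"
    by simp
  finally show ?case .
qed

definition Amat :: "nat \<Rightarrow> (nat \<Rightarrow> nat \<Rightarrow> nat list \<Rightarrow> complex) \<Rightarrow> (nat \<Rightarrow> nat) \<Rightarrow> nat \<Rightarrow> nat \<Rightarrow> complex mat" where
  "Amat d u k j i = mat (k j) (k (Suc j)) (\<lambda>(s,t). ip (tuples j d) (u j s) (\<lambda>x. u (Suc j) t (x @ [i])))"

lemma foldl_A: assumes "k 0 = 1" "v \<in> tuples N d" "m \<le> N"
  shows "foldl (\<lambda>M j. M * Amat d u k j (v ! j)) (1\<^sub>m 1) [0..<m] = mat 1 (k m) (\<lambda>(_,t). wv d u k m t (take m v))"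
  using assms(3)
proof (induction m)
  case 0
  then show ?case using assms(1) by (intro eq_matI) auto
next
  case (Suc m)
  have lv: "length v = N" using assms(2) unfolding tuples_def by simp
  have "foldl (\<lambda>M j. M * Amat d u k j (v ! j)) (1\<^sub>m 1) [0..<Suc m] =
      mat 1 (k m) (\<lambda>(_,t). wv d u k m t (take m v)) * Amat d u k m (v ! m)"
    using Suc by simp
  also have "\<dots> = mat 1 (k (Suc m)) (\<lambda>(_,t). wv d u k (Suc m) t (take (Suc m) v))"
  proof (rule eq_matI)
    fix i j assume i: "i < dim_row (mat 1 (k (Suc m)) (\<lambda>(_,t). wv d u k (Suc m) t (take (Suc m) v)))"
      and j: "j < dim_col (mat 1 (k (Suc m)) (\<lambda>(_,t). wv d u k (Suc m) t (take (Suc m) v)))"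
    have bl: "butlast (take (Suc m) v) = take m v" using lv Suc.prems by (simp add: butlast_take)
    have la: "last (take (Suc m) v) = v ! m" using lv Suc.prems by (simp add: take_Suc_conv_app_nth)
    show "(mat 1 (k m) (\<lambda>(_,t). wv d u k m t (take m v)) * Amat d u k m (v ! m)) $$ (i,j) =
          mat 1 (k (Suc m)) (\<lambda>(_,t). wv d u k (Suc m) t (take (Suc m) v)) $$ (i,j)"
      using i j bl la by (simp add: mult_index_sum Amat_def del: index_mult_mat(1))
  qed (simp_all add: Amat_def)
  finally show ?case .
qed



definition ix :: "nat \<Rightarrow> nat list \<Rightarrow> nat" where
  "ix d xs = foldl (\<lambda>r x. r * d + x) 0 xs"

lemma ix_snoc: "ix d (xs @ [x]) = ix d xs * d + x"
  unfolding ix_def by simp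

lemma digits_len: "length (digits d k r) = k"
  by (induction k arbitrary: r) auto

lemma digits_tuples: "d > 0 \<Longrightarrow> digits d k r \<in> tuples k d"
  unfolding tuples_def
proof (induction k arbitrary: r)
  case 0 then show ?case by simp
next
  case (Suc k) then show ?case by (auto simp: digits_len)
qed

lemma ix_digits: "d > 0 \<Longrightarrow> r < d^k \<Longrightarrow> ix d (digits d k r) = r"
proof (induction k arbitrary: r)
  case 0 then show ?case by (simp add: ix_def)
next
  case (Suc k)
  have "r div d < d^k" using Suc.prems by (simp add: div_less_iff_less_mult mult.commute)
  then show ?case using Suc by (simp add: ix_snoc)
qed

lemma tuples_Suc_snoc: "x \<in> tuples (Suc k) d \<Longrightarrow> \<exists>xs y. x = xs @ [y] \<and> xs \<in> tuples k d \<and> y < d"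
  unfolding tuples_def by (cases x rule: rev_cases) auto

lemma digits_ix: "d > 0 \<Longrightarrow> x \<in> tuples k d \<Longrightarrow> digits d k (ix d x) = x \<and> ix d x < d^k"
proof (induction k arbitrary: x)
  case 0 then show ?case by (simp add: tuples_def ix_def)
next
  case (Suc k)
  obtain xs y where x: "x = xs @ [y]" and xs: "xs \<in> tuples k d" and y: "y < d"
    using tuples_Suc_snoc[OF Suc.prems(2)] by blast
  have IH: "digits d k (ix d xs) = xs" "ix d xs < d^k" using Suc.IH[OF Suc.prems(1) xs] by auto
  have "ix d xs * d + y < (ix d xs + 1) * d" using y by simp
  also have "\<dots> \<le> d^k * d" using IH(2) by (intro mult_right_mono) auto
  finally have lt: "ix d x < d^Suc k" unfolding x ix_snoc by (simp add: mult.commute)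
  have "digits d (Suc k) (ix d x) = xs @ [y]"
    unfolding x ix_snoc using y IH(1) by simp
  then show ?case using lt x by simp
qed

lemma bij_digits: "d > 0 \<Longrightarrow> bij_betw (digits d k) {..<d^k} (tuples k d)"
  by (rule bij_betw_byWitness[where f'="ix d"]) (auto simp: ix_digits digits_ix digits_tuples)

lemma sum_tuples_digits: "d > 0 \<Longrightarrow> (\<Sum>x\<in>tuples k d. F x) = (\<Sum>r<d^k. F (digits d k r))"
  using sum.reindex_bij_betw[OF bij_digits, of d F k] by simp

lemma sum_rev3: "(\<Sum>a\<in>A. \<Sum>b\<in>B. \<Sum>c\<in>C. F a b c) = (\<Sum>c\<in>C. \<Sum>b\<in>B. \<Sum>a\<in>A. F a b c)"
proof -
  have "(\<Sum>a\<in>A. \<Sum>b\<in>B. \<Sum>c\<in>C. F a b c) = (\<Sum>b\<in>B. \<Sum>a\<in>A. \<Sum>c\<in>C. F a b c)"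
    by (rule sum.swap)
  also have "\<dots> = (\<Sum>b\<in>B. \<Sum>c\<in>C. \<Sum>a\<in>A. F a b c)"
    by (rule sum.cong[OF refl], rule sum.swap)
  also have "\<dots> = (\<Sum>c\<in>C. \<Sum>b\<in>B. \<Sum>a\<in>A. F a b c)"
    by (rule sum.swap)
  finally show ?thesis .
qed

lemma trace_adj: assumes U: "U \<in> carrier_mat n n" and UU: "U * adj U = 1\<^sub>m n" and R: "R \<in> carrier_mat n n"
  shows "(\<Sum>s<n. (adj U * R * U) $$ (s,s)) = (\<Sum>r<n. R $$ (r,r))"
proof -
  have dims: "dim_row U = n" "dim_col U = n" "dim_row R = n" "dim_col R = n" using U R by auto
  have "(\<Sum>s<n. (adj U * R * U) $$ (s,s)) = (\<Sum>s<n. \<Sum>r'<n. \<Sum>r<n. cnj (U $$ (r,s)) * R $$ (r,r') * U $$ (r',s))"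
    using dims by (simp add: mult_index_sum sum_distrib_right del: index_mult_mat(1))
  also have "\<dots> = (\<Sum>r<n. \<Sum>r'<n. \<Sum>s<n. cnj (U $$ (r,s)) * R $$ (r,r') * U $$ (r',s))"
    by (rule sum_rev3)
  also have "\<dots> = (\<Sum>r<n. \<Sum>r'<n. R $$ (r,r') * (\<Sum>s<n. U $$ (r',s) * cnj (U $$ (r,s))))"
    by (simp add: sum_distrib_left mult_ac)
  also have "\<dots> = (\<Sum>r<n. \<Sum>r'<n. R $$ (r,r') * (U * adj U) $$ (r',r))"
    using dims by (simp add: mult_index_sum del: index_mult_mat(1))
  also have "\<dots> = (\<Sum>r<n. R $$ (r,r))"
    unfolding UU by (simp add: if_distrib cong: if_cong)
  finally show ?thesis .
qed

lemma quad_adj: assumes U: "U \<in> carrier_mat n n" and R: "R \<in> carrier_mat n n"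
  and Rdef: "\<And>r r'. r < n \<Longrightarrow> r' < n \<Longrightarrow> R $$ (r,r') = (\<Sum>z\<in>Z. Psi r z * cnj (Psi r' z))"
  and s: "s < n"
  shows "(adj U * R * U) $$ (s,s) = (\<Sum>z\<in>Z. (\<Sum>r<n. cnj (U $$ (r,s)) * Psi r z) * cnj (\<Sum>r<n. cnj (U $$ (r,s)) * Psi r z))"
proof -
  have dims: "dim_row U = n" "dim_col U = n" "dim_row R = n" "dim_col R = n" using U R by auto
  have "(adj U * R * U) $$ (s,s) = (\<Sum>r'<n. (\<Sum>r<n. cnj (U $$ (r,s)) * R $$ (r,r')) * U $$ (r',s))"
    using dims s by (simp add: mult_index_sum del: index_mult_mat(1))
  also have "\<dots> = (\<Sum>r'<n. \<Sum>r<n. \<Sum>z\<in>Z. cnj (U $$ (r,s)) * Psi r z * (U $$ (r',s) * cnj (Psi r' z)))"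
    using Rdef by (simp add: sum_distrib_left sum_distrib_right mult_ac)
  also have "\<dots> = (\<Sum>z\<in>Z. \<Sum>r<n. \<Sum>r'<n. cnj (U $$ (r,s)) * Psi r z * (U $$ (r',s) * cnj (Psi r' z)))"
    by (rule sum_rev3)
  also have "\<dots> = (\<Sum>z\<in>Z. (\<Sum>r<n. cnj (U $$ (r,s)) * Psi r z) * cnj (\<Sum>r<n. cnj (U $$ (r,s)) * Psi r z))"
    by (simp add: sum_distrib_left sum_distrib_right) (rule sum.cong[OF refl], rule sum.swap)
  finally show ?thesis .
qed

lemma sum_list_drop: "sum_list (drop D xs) = (\<Sum>i<length xs. xs ! i) - (\<Sum>i<min (length xs) D. xs ! i)"
  for xs :: "real list"
proof -
  have "sum_list xs = sum_list (take D xs) + sum_list (drop D xs)"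
    by (metis append_take_drop_id sum_list_append)
  moreover have "sum_list xs = (\<Sum>i<length xs. xs ! i)" by (simp add: sum_list_sum_nth atLeast0LessThan)
  moreover have "sum_list (take D xs) = (\<Sum>i<min (length xs) D. xs ! i)"
    by (simp add: sum_list_sum_nth atLeast0LessThan)
  ultimately show ?thesis by simp
qed

lemma proots_linear_prod: "proots (\<Prod>e\<leftarrow>es. [:-e, 1:]) = mset (es :: complex list)"
proof (induction es)
  case Nil then show ?case by simp
next
  case (Cons e es)
  have nz: "(\<Prod>x\<leftarrow>es. [:-x, 1:]) \<noteq> (0 :: complex poly)"
  proof -
    have "\<And>x. (0::complex poly) \<noteq> [:-x,1:]" by (metis pCons_eq_0_iff one_neq_zero)
    then show ?thesis by (auto simp: prod_list_zero_iff)
  qed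
  have pm: "proots ([:-e,1:] * (\<Prod>x\<leftarrow>es. [:-x, 1:])) = proots [:-e,1:] + proots (\<Prod>x\<leftarrow>es. [:-x, 1:])"
    by (rule proots_mult[OF _ nz]) simp
  have pl: "proots [:-e,1:] = {#e#}" using proots_linear_factor[of "-e"] by simp
  have "proots (\<Prod>x\<leftarrow>e#es. [:-x,1:]) = proots ([:-e,1:] * (\<Prod>x\<leftarrow>es. [:-x, 1:]))"
    by (simp only: list.map prod_list.Cons)
  also have "\<dots> = {#e#} + mset es" by (simp only: pm pl Cons.IH)
  finally show ?case by simp
qed



lemma cmod_sq_cnj': "(cmod z)^2 = Re (z * cnj z)"
  by (simp only: cmod_power2) (simp add: power2_eq_square)

lemma trunc_proj:
  fixes psi :: "nat list \<Rightarrow> complex"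
  assumes d: "d > 0" and aN: "a \<le> N"
  shows "\<exists>u. orthon (tuples a d) u (min D (d^a)) \<and>
     nsq (tuples N d) (\<lambda>v. psi v - Pop d a u (min D (d^a)) psi v) \<le> trunc_err N d psi a D"
proof -
  define n where "n = d^a"
  define k where "k = min D n"
  define R where "R = reduced_density N d a psi"
  define Psi where "Psi r z = psi (digits d a r @ z)" for r z
  have R: "R \<in> carrier_mat n n" by (simp add: R_def reduced_density_def n_def)
  have Rent: "R $$ (r,r') = (\<Sum>z\<in>tuples (N-a) d. Psi r z * cnj (Psi r' z))" if "r < n" "r' < n" for r r'
    using that by (simp add: R_def reduced_density_def n_def Psi_def)
  have herm: "adj R = R"
  proof (rule eq_matI)
    fix i j assume "i < dim_row R" "j < dim_col R"
    then have i: "i < n" and j: "j < n" using R by auto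
    show "adj R $$ (i,j) = R $$ (i,j)"
      using i j R by (simp add: Rent mult.commute)
  qed (use R in auto)
  obtain as where cpas: "char_poly R = (\<Prod>a\<leftarrow>as. [:-a,1:])" and las: "length as = n"
    using char_poly_factorized[OF R] by auto
  from diag_herm[OF R herm cpas] obtain U0 where U0: "U0 \<in> carrier_mat n n"
    and D0: "adj U0 * R * U0 = mat n n (\<lambda>(i,j). if i = j then as!i else 0)" by blast
  have as_real: "cnj x = x" if "x \<in> set as" for x
  proof -
    obtain i where i: "i < n" and x: "x = as ! i" using \<open>x \<in> set as\<close> las by (metis in_set_conv_nth)
    have "adj (adj U0 * R * U0) = adj U0 * R * U0"
      using U0 R herm by (simp add: adj_mult[of _ n n _ n] sq_mult_carrier assoc_mult_mat[of _ n n _ n _ n])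
    then have "adj (adj U0 * R * U0) $$ (i,i) = (adj U0 * R * U0) $$ (i,i)" by simp
    then show ?thesis using i x unfolding D0 by simp
  qed
  define evs where "evs = eigenvalues_desc R"
  have pr: "proots (char_poly R) = mset as" using cpas proots_linear_prod by simp
  have mev: "mset evs = image_mset Re (mset as)"
    unfolding evs_def eigenvalues_desc_def pr by simp
  have len: "length evs = n" using arg_cong[OF mev, of size] las by simp
  define es where "es = map complex_of_real evs"
  have "mset es = image_mset (\<lambda>x. complex_of_real (Re x)) (mset as)"
    unfolding es_def mset_map mev by (simp add: multiset.map_comp comp_def)
  also have "\<dots> = image_mset id (mset as)"
  proof (rule image_mset_cong)
    fix x assume "x \<in># mset as"
    then have "cnj x = x" using as_real by simp
    then have "Im x = 0" using Reals_cnj_iff complex_is_Real_iff by metis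
    then show "complex_of_real (Re x) = id x" by (simp add: complex_eq_iff)
  qed
  finally have mes: "mset es = mset as" by simp
  have cpes: "char_poly R = (\<Prod>e\<leftarrow>es. [:-e,1:])"
  proof -
    have "(\<Prod>e\<leftarrow>es. [:-e,1:]) = prod_mset (image_mset (\<lambda>e. [:-e,1:]) (mset es))"
      by (simp flip: prod_mset_prod_list)
    also have "\<dots> = (\<Prod>e\<leftarrow>as. [:-e,1:])" unfolding mes by (simp flip: prod_mset_prod_list)
    finally show ?thesis using cpas by simp
  qed
  from diag_herm[OF R herm cpes] obtain U where U: "U \<in> carrier_mat n n"
    and UU: "adj U * U = 1\<^sub>m n" and UU': "U * adj U = 1\<^sub>m n"
    and UD: "adj U * R * U = mat n n (\<lambda>(i,j). if i = j then es!i else 0)" by blast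
  have dU: "dim_row U = n" "dim_col U = n" using U by auto
  define u where "u s x = U $$ (ix d x, s)" for s x
  have ipu: "ip (tuples a d) (u s) f = (\<Sum>r<n. cnj (U $$ (r,s)) * f (digits d a r))" for s f
    unfolding ip_def u_def n_def sum_tuples_digits[OF d] using d by (intro sum.cong) (auto simp: ix_digits)
  have orth: "orthon (tuples a d) u k"
    unfolding orthon_def
  proof (intro allI impI)
    fix s t assume s: "s < k" and t: "t < k"
    then have s': "s < n" and t': "t < n" by (auto simp: k_def)
    have "ip (tuples a d) (u s) (u t) = (\<Sum>r<n. cnj (U $$ (r,s)) * U $$ (r,t))"
      unfolding ipu unfolding u_def n_def using d by (intro sum.cong) (auto simp: ix_digits)
    also have "\<dots> = (adj U * U) $$ (s,t)"
      using s' t' dU by (simp add: mult_index_sum del: index_mult_mat(1))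
    also have "\<dots> = (if s = t then 1 else 0)" using UU s' t' by simp
    finally show "ip (tuples a d) (u s) (u t) = (if s = t then 1 else 0)" .
  qed
  define c where "c s z = (\<Sum>r<n. cnj (U $$ (r,s)) * Psi r z)" for s z
  have "nsq (tuples N d) (\<lambda>v. psi v - Pop d a u k psi v) =
      (\<Sum>z\<in>tuples (N-a) d. nsq (tuples a d) (\<lambda>x. psi (x @ z) - pr (tuples a d) u k (\<lambda>x'. psi (x' @ z)) x))"
    unfolding nsq_split[OF aN] by (intro sum.cong refl) (simp add: nsq_def Pop_app)
  also have "\<dots> = (\<Sum>z\<in>tuples (N-a) d. nsq (tuples a d) (\<lambda>x. psi (x @ z)) - (\<Sum>s<k. (cmod (c s z))^2))"
    by (intro sum.cong refl) (simp add: nsq_res[OF orth] ipu c_def Psi_def)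
  also have "\<dots> = (\<Sum>z\<in>tuples (N-a) d. nsq (tuples a d) (\<lambda>x. psi (x @ z))) - (\<Sum>s<k. \<Sum>z\<in>tuples (N-a) d. (cmod (c s z))^2)"
    by (simp add: sum_subtractf sum.swap[of _ "{..<k}"])
  also have "(\<Sum>z\<in>tuples (N-a) d. nsq (tuples a d) (\<lambda>x. psi (x @ z))) = (\<Sum>s<n. evs ! s)"
  proof -
    have "(\<Sum>z\<in>tuples (N-a) d. nsq (tuples a d) (\<lambda>x. psi (x @ z))) = (\<Sum>r<n. \<Sum>z\<in>tuples (N-a) d. (cmod (Psi r z))^2)"
      unfolding nsq_def sum_tuples_digits[OF d] Psi_def n_def by (rule sum.swap)
    also have "\<dots> = Re (\<Sum>r<n. R $$ (r,r))"
      by (simp add: Rent Re_sum cmod_sq_cnj mult.commute)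
    also have "\<dots> = Re (\<Sum>s<n. (adj U * R * U) $$ (s,s))"
      using trace_adj[OF U UU' R] by simp
    also have "\<dots> = (\<Sum>s<n. evs ! s)"
      unfolding UD using len by (simp add: Re_sum es_def)
    finally show ?thesis .
  qed
  also have "(\<Sum>s<k. \<Sum>z\<in>tuples (N-a) d. (cmod (c s z))^2) = (\<Sum>s<k. evs ! s)"
  proof (intro sum.cong refl)
    fix s assume "s \<in> {..<k}"
    then have s: "s < n" by (auto simp: k_def)
    have q: "(adj U * R * U) $$ (s,s) = (\<Sum>z\<in>tuples (N-a) d. c s z * cnj (c s z))"
      using quad_adj[OF U R Rent s] unfolding c_def .
    have "(\<Sum>z\<in>tuples (N-a) d. (cmod (c s z))^2) = Re ((adj U * R * U) $$ (s,s))"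
      unfolding q Re_sum by (intro sum.cong refl) (simp add: cmod_sq_cnj')
    also have "\<dots> = evs ! s" unfolding UD using s len by (simp add: es_def)
    finally show "(\<Sum>z\<in>tuples (N-a) d. (cmod (c s z))^2) = evs ! s" .
  qed
  also have "(\<Sum>s<n. evs ! s) - (\<Sum>s<k. evs ! s) = trunc_err N d psi a D"
    unfolding trunc_err_def sum_list_drop evs_def[symmetric] R_def[symmetric] len k_def
    by (simp add: min.commute)
  finally have "nsq (tuples N d) (\<lambda>v. psi v - Pop d a u k psi v) = trunc_err N d psi a D" .
  then show ?thesis using orth unfolding k_def n_def by auto
qed



theorem lemma1:
  fixes d N D :: nat and psi :: "nat list \<Rightarrow> complex"
  assumes "d \<ge> 2" and "N \<ge> 2" and "normalized N d psi" and "D \<ge> 1"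
  shows "\<exists>phi. is_mps N d D phi \<and>
           sqnorm_diff N d psi phi \<le> 2 * (\<Sum>a = 1..N - 1. trunc_err N d psi a D)"
proof -
  have d: "d > 0" using assms(1) by simp
  have "\<forall>a. \<exists>u. a \<le> N \<longrightarrow> orthon (tuples a d) u (min D (d^a)) \<and>
     nsq (tuples N d) (\<lambda>v. psi v - Pop d a u (min D (d^a)) psi v) \<le> trunc_err N d psi a D"
    using trunc_proj[OF d] by blast
  then obtain U where U: "\<And>a. a \<le> N \<Longrightarrow> orthon (tuples a d) (U a) (min D (d^a)) \<and>
     nsq (tuples N d) (\<lambda>v. psi v - Pop d a (U a) (min D (d^a)) psi v) \<le> trunc_err N d psi a D"
    by metis
  define kk where "kk j = (if j = 0 \<or> j = N then 1 else min D (d^j))" for j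
  define uu where "uu j = (if j = 0 then (\<lambda>s x. 1) else if j = N then (\<lambda>s x. psi x) else U j)" for j
  define P where "P j = Pop d j (uu j) (kk j)" for j
  define phi where "phi = foldr P [1..<N] psi"
  have Pj: "P j = Pop d j (U j) (min D (d^j))" if "j \<in> set [1..<N]" for j
    using that by (simp add: P_def uu_def kk_def)
  have err: "sqnorm_diff N d psi phi \<le> (\<Sum>a = 1..N - 1. trunc_err N d psi a D)"
  proof -
    have "sqnorm_diff N d psi phi = nsq (tuples N d) (\<lambda>v. psi v - foldr (\<lambda>j. Pop d j (uu j) (kk j)) [1..<N] psi v)"
      unfolding sqnorm_diff_def nsq_def phi_def P_def[abs_def] by simp
    also have "\<dots> \<le> (\<Sum>j\<leftarrow>[1..<N]. nsq (tuples N d) (\<lambda>v. psi v - Pop d j (uu j) (kk j) psi v))"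
    proof (rule chain)
      show "\<forall>j\<in>set [1..<N]. orthon (tuples j d) (uu j) (kk j) \<and> j \<le> N"
        using U by (auto simp: uu_def kk_def)
    qed
    also have "\<dots> \<le> (\<Sum>j\<leftarrow>[1..<N]. trunc_err N d psi j D)"
    proof (rule sum_list_mono)
      fix j assume "j \<in> set [1..<N]"
      then show "nsq (tuples N d) (\<lambda>v. psi v - Pop d j (uu j) (kk j) psi v) \<le> trunc_err N d psi j D"
        using U[of j] by (auto simp: uu_def kk_def)
    qed
    also have "\<dots> = (\<Sum>a = 1..N - 1. trunc_err N d psi a D)"
    proof -
      have "{1..N-1} = set [1..<N]" using assms(2) by auto
      then show ?thesis by (simp add: sum_list_distinct_conv_sum_set)
    qed
    finally show ?thesis .
  qed
  have nonneg: "(\<Sum>a = 1..N - 1. trunc_err N d psi a D) \<ge> 0"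
  proof (rule sum_nonneg)
    fix a assume "a \<in> {1..N-1}"
    then have "a \<le> N" by auto
    then show "trunc_err N d psi a D \<ge> 0" using U[of a] nsq_nonneg order_trans by blast
  qed
  have mps: "is_mps N d D phi"
    unfolding is_mps_def
  proof (intro exI conjI)
    show "kk 0 = 1" "kk N = 1" by (simp_all add: kk_def)
    show "\<forall>k\<le>N. kk k \<le> D" using assms(4) by (auto simp: kk_def)
    show "\<forall>k<N. \<forall>i<d. Amat d uu kk k i \<in> carrier_mat (kk k) (kk (Suc k))"
      by (simp add: Amat_def)
    show "\<forall>is\<in>tuples N d. phi is = mps_coeff N (Amat d uu kk) is"
    proof
      fix v assume v: "v \<in> tuples N d"
      have lv: "length v = N" using v by (simp add: tuples_def)
      have k0: "kk 0 = 1" and u0: "uu 0 0 [] = 1" by (simp_all add: kk_def uu_def)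
      have "mps_coeff N (Amat d uu kk) v = wv d uu kk N 0 (take N v)"
        unfolding mps_coeff_def foldl_A[where u=uu and k=kk and d=d and m=N and N=N, OF k0 v le_refl] by (simp add: kk_def)
      also have "\<dots> = Tmap d uu kk (N - 1) psi v"
      proof -
        have NS: "N = Suc (N - 1)" using assms(2) by simp
        have bl: "butlast v = take (N-1) v" by (simp add: butlast_conv_take lv)
        have dl0: "drop (N-1) v = [v ! (N-1)]" using lv assms(2) by (intro nth_equalityI) auto
        have vne: "v \<noteq> []" using lv assms(2) by auto
        have "last v = v ! (N-1)" using last_conv_nth[OF vne] lv by simp
        then have dl: "drop (N-1) v = [last v]" using dl0 by simp
        have "wv d uu kk N 0 v = wv d uu kk (Suc (N-1)) 0 v" using NS by simp
        also have "\<dots> = Tmap d uu kk (N - 1) psi v"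
          unfolding wv.simps Tmap_def bl dl using NS by (simp add: uu_def)
        finally show ?thesis using lv by simp
      qed
      also have "\<dots> = foldr (\<lambda>j. Pop d j (uu j) (kk j)) [1..<Suc (N-1)] psi v"
        by (rule Tmap_foldr[where k=kk and u=uu and d=d and N=N, OF k0 u0 v]) simp
      also have "\<dots> = phi v" using assms(2) by (simp add: phi_def P_def[abs_def])
      finally show "phi v = mps_coeff N (Amat d uu kk) v" by simp
    qed
  qed
  show ?thesis using mps err nonneg by (intro exI[of _ phi]) auto
qed


end
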